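(* Let $W\in\mathcal{P}(\mathcal{Y}|\mathcal{X})$ be a symmetric and singular channel with no all-zero column, and fix $x_{\mathrm o}\in\mathcal{X}$ and $\epsilon\in(0,1)$. (i) For every $x\in\mathcal{X}$ and $\lambda\in\mathbb{R}$, $M_x(\lambda)=M_{x_{\mathrm o}}(\lambda)$. (ii) For all $x\in\mathcal{X}$: $\mathrm{E}_{W(\cdot|x)}[\ln\frac{W(Y|x)}{q(Y)}]=\mathrm{E}_{W(\cdot|x_{\mathrm o})}[\ln\frac{W(Y|x_{\mathrm o})}{q(Y)}]=C(W)$; $\mathrm{Var}_{W(\cdot|x)}[\ln\frac{W(Y|x)}{q(Y)}]=\mathrm{Var}_{W(\cdot|x_{\mathrm o})}[\ln\frac{W(Y|x_{\mathrm o})}{q(Y)}]=:V(W)$ and $V(W)=V_\epsilon(W)$; and $m_3(x)=m_3(x_{\mathrm o})$. (iii) For every $R\ge0$, every $(N,R)$ code with ideal feedback and every message $m$, $P_{\mathbf{Y}^N|M}\{\mathcal{S}(R)\mid m\}=W\{\mathcal{S}(R)\mid\mathbf{x}_{\mathrm o}^N\}$, where $\mathbf{x}_{\mathrm o}^N$ is the all-$x_{\mathrm o}$ sequence. (iv) $\mathrm{E}_q[-\ln\alpha_Y]=C(W)$, $\mathrm{Var}_q[-\ln\alpha_Y]=V(W)$ and $\mathrm{E}_q[|-\ln\alpha_Y-C(W)|^3]=m_3(x_{\mathrm o})$.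
   Context: $\mathcal{X},\mathcal{Y}$ finite. Symmetric (Gallager): outputs partitionable into subsets within each of which every row of the transition submatrix is a permutation of every other row and every column of every other column. Singular: $W(y|x)W(y|z)>0$ implies $W(y|x)=W(y|z)$. $q(y)=\sum_x\frac1{|\mathcal{X}|}W(y|x)$; $\alpha_y=\sum_{x:W(y|x)>0}\frac1{|\mathcal{X}|}$; $M_x(\lambda)=\mathrm{E}_{W(\cdot|x)}[e^{\lambda\ln\frac{W(Y|x)}{q(Y)}}]$; $m_3(x)=\mathrm{E}_{W(\cdot|x)}[|\ln\frac{W(Y|x)}{q(Y)}-C(W)|^3]$; $C(W)$ is the capacity. For $P\in\mathcal{P}(\mathcal{X})$, $q_P(y)=\sum_xP(x)W(y|x)$, $V(P,W)=\sum_{x,y}P(x)W(y|x)[\ln\frac{W(y|x)}{q_P(y)}-\sum_bW(b|x)\ln\frac{W(b|x)}{q_P(b)}]^2$, $V_\epsilon(W)=\min_{Q:I(Q;W)=C(W)}V(Q,W)$ for $\epsilon<1/2$ and the corresponding max for $\epsilon\ge1/2$. $\mathcal{S}(R)=\{\mathbf{y}^N:\frac1N\sum_n\ln\frac1{\alpha_{y_n}}\le R\}$. A code with ideal feedback has message set $\{1,\dots,\lceil e^{NR}\rceil\}$, encoders $f_n:\mathcal{M}\times\mathcal{Y}^{n-1}\to\mathcal{X}$, and $P_{\mathbf{Y}^N|M}(\mathbf{y}^N|m)=\prod_nW(y_n|f_n(m,\mathbf{y}^{n-1}))$. *)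

theory Defs
  imports "HOL-Analysis.Analysis" "HOL-Library.Disjoint_Sets"
begin

definition channel :: "('x::finite \<Rightarrow> 'y::finite \<Rightarrow> real) \<Rightarrow> bool" where
  "channel W \<longleftrightarrow> (\<forall>x y. 0 \<le> W x y) \<and> (\<forall>x. (\<Sum>y\<in>UNIV. W x y) = 1)"

definition dist :: "('x::finite \<Rightarrow> real) \<Rightarrow> bool" where
  "dist P \<longleftrightarrow> (\<forall>x. 0 \<le> P x) \<and> (\<Sum>x\<in>UNIV. P x) = 1"

definition gallager_symmetric :: "('x::finite \<Rightarrow> 'y::finite \<Rightarrow> real) \<Rightarrow> bool" where
  "gallager_symmetric W \<longleftrightarrow> (\<exists>Part. partition_on (UNIV :: 'y set) Part \<and>
     (\<forall>B\<in>Part.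
        (\<forall>x x'. \<exists>\<sigma>. bij_betw \<sigma> B B \<and> (\<forall>y\<in>B. W x' y = W x (\<sigma> y))) \<and>
        (\<forall>y\<in>B. \<forall>y'\<in>B. \<exists>\<pi>. bij \<pi> \<and> (\<forall>x. W x y' = W (\<pi> x) y))))"

definition singular_channel :: "('x::finite \<Rightarrow> 'y::finite \<Rightarrow> real) \<Rightarrow> bool" where
  "singular_channel W \<longleftrightarrow> (\<forall>x z y. W x y * W z y > 0 \<longrightarrow> W x y = W z y)"

definition no_zero_column :: "('x::finite \<Rightarrow> 'y::finite \<Rightarrow> real) \<Rightarrow> bool" where
  "no_zero_column W \<longleftrightarrow> (\<forall>y. \<exists>x. W x y \<noteq> 0)"

definition qU :: "('x::finite \<Rightarrow> 'y::finite \<Rightarrow> real) \<Rightarrow> 'y \<Rightarrow> real" where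
  "qU W y = (\<Sum>x\<in>UNIV. W x y / real CARD('x))"

definition alpha :: "('x::finite \<Rightarrow> 'y::finite \<Rightarrow> real) \<Rightarrow> 'y \<Rightarrow> real" where
  "alpha W y = (\<Sum>x\<in>{x. W x y > 0}. 1 / real CARD('x))"

definition idens :: "('x::finite \<Rightarrow> 'y::finite \<Rightarrow> real) \<Rightarrow> 'x \<Rightarrow> 'y \<Rightarrow> real" where
  "idens W x y = ln (W x y / qU W y)"

definition mgf :: "('x::finite \<Rightarrow> 'y::finite \<Rightarrow> real) \<Rightarrow> 'x \<Rightarrow> real \<Rightarrow> real" where
  "mgf W x lam = (\<Sum>y\<in>UNIV. W x y * exp (lam * idens W x y))"

definition mean_id :: "('x::finite \<Rightarrow> 'y::finite \<Rightarrow> real) \<Rightarrow> 'x \<Rightarrow> real" where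
  "mean_id W x = (\<Sum>y\<in>UNIV. W x y * idens W x y)"

definition var_id :: "('x::finite \<Rightarrow> 'y::finite \<Rightarrow> real) \<Rightarrow> 'x \<Rightarrow> real" where
  "var_id W x = (\<Sum>y\<in>UNIV. W x y * (idens W x y - mean_id W x)\<^sup>2)"

definition qP :: "('x::finite \<Rightarrow> real) \<Rightarrow> ('x \<Rightarrow> 'y::finite \<Rightarrow> real) \<Rightarrow> 'y \<Rightarrow> real" where
  "qP P W y = (\<Sum>x\<in>UNIV. P x * W x y)"

definition mutual_info :: "('x::finite \<Rightarrow> real) \<Rightarrow> ('x \<Rightarrow> 'y::finite \<Rightarrow> real) \<Rightarrow> real" where
  "mutual_info P W = (\<Sum>x\<in>UNIV. \<Sum>y\<in>UNIV. P x * W x y * ln (W x y / qP P W y))"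

definition capacity :: "('x::finite \<Rightarrow> 'y::finite \<Rightarrow> real) \<Rightarrow> real" where
  "capacity W = (SUP P\<in>{P. dist P}. mutual_info P W)"

definition m3 :: "('x::finite \<Rightarrow> 'y::finite \<Rightarrow> real) \<Rightarrow> 'x \<Rightarrow> real" where
  "m3 W x = (\<Sum>y\<in>UNIV. W x y * \<bar>idens W x y - capacity W\<bar> ^ 3)"

definition Vcond :: "('x::finite \<Rightarrow> real) \<Rightarrow> ('x \<Rightarrow> 'y::finite \<Rightarrow> real) \<Rightarrow> real" where
  "Vcond P W = (\<Sum>x\<in>UNIV. \<Sum>y\<in>UNIV. P x * W x y *
      (ln (W x y / qP P W y) - (\<Sum>b\<in>UNIV. W x b * ln (W x b / qP P W b)))\<^sup>2)"

definition Veps :: "('x::finite \<Rightarrow> 'y::finite \<Rightarrow> real) \<Rightarrow> real \<Rightarrow> real" where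
  "Veps W \<epsilon> = (if \<epsilon> < 1/2
      then Inf {Vcond Q W | Q. dist Q \<and> mutual_info Q W = capacity W}
      else Sup {Vcond Q W | Q. dist Q \<and> mutual_info Q W = capacity W})"

definition S_set :: "('x::finite \<Rightarrow> 'y::finite \<Rightarrow> real) \<Rightarrow> nat \<Rightarrow> real \<Rightarrow> 'y list set" where
  "S_set W N R = {ys. length ys = N \<and>
      (1 / real N) * (\<Sum>n<N. ln (1 / alpha W (ys ! n))) \<le> R}"

text \<open>Output law of a feedback code: encoders f n m (y_1..y_{n-1}) (0-indexed n).\<close>
definition fb_prob :: "('x::finite \<Rightarrow> 'y::finite \<Rightarrow> real) \<Rightarrow> nat \<Rightarrow>
    (nat \<Rightarrow> nat \<Rightarrow> 'y list \<Rightarrow> 'x) \<Rightarrow> nat \<Rightarrow> 'y list \<Rightarrow> real" where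
  "fb_prob W N f m ys = (\<Prod>n<N. W (f n m (take n ys)) (ys ! n))"

definition prod_prob :: "('x::finite \<Rightarrow> 'y::finite \<Rightarrow> real) \<Rightarrow> nat \<Rightarrow> (nat \<Rightarrow> 'x) \<Rightarrow> 'y list \<Rightarrow> real" where
  "prod_prob W N xs ys = (\<Prod>n<N. W (xs n) (ys ! n))"

end

theory Submission
  imports Defs
begin

lemma alpha_card: "alpha W y = real (card {x. W x y > 0}) / real CARD('x)"
  for W :: "'x::finite \<Rightarrow> 'y::finite \<Rightarrow> real"
  by (simp add: alpha_def)

lemma qU_eq:
  fixes W :: "'x::finite \<Rightarrow> 'y::finite \<Rightarrow> real"
  assumes ch: "channel W" and sg: "singular_channel W" and pos: "W x y > 0"
  shows "qU W y = alpha W y * W x y"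
proof -
  have "qU W y = (\<Sum>x'\<in>{x'. W x' y > 0}. W x' y / real CARD('x))"
    unfolding qU_def
    by (rule sum.mono_neutral_right) (use ch in \<open>auto simp: channel_def less_le\<close>)
  also have "\<dots> = (\<Sum>x'\<in>{x'. W x' y > 0}. W x y / real CARD('x))"
  proof (rule sum.cong)
    fix x' assume "x' \<in> {x'. W x' y > 0}"
    then have "W x y * W x' y > 0" using pos by simp
    then show "W x' y / real CARD('x) = W x y / real CARD('x)"
      using sg unfolding singular_channel_def by metis
  qed simp
  also have "\<dots> = alpha W y * W x y" by (simp add: alpha_card)
  finally show ?thesis .
qed

lemma alpha_pos:
  fixes W :: "'x::finite \<Rightarrow> 'y::finite \<Rightarrow> real"
  assumes "W x y > 0" shows "alpha W y > 0"
proof -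
  have "x \<in> {x. W x y > 0}" using assms by simp
  then have "card {x. W x y > 0} > 0" by (metis card_gt_0_iff empty_iff finite)
  then show ?thesis by (simp add: alpha_card)
qed

lemma alpha_pos2:
  fixes W :: "'x::finite \<Rightarrow> 'y::finite \<Rightarrow> real"
  assumes "channel W" "no_zero_column W" shows "alpha W y > 0"
proof -
  obtain x where "W x y \<noteq> 0" using assms(2) unfolding no_zero_column_def by blast
  then have "W x y > 0" using assms(1) unfolding channel_def by (metis less_eq_real_def)
  then show ?thesis by (rule alpha_pos)
qed

lemma idens_eq:
  fixes W :: "'x::finite \<Rightarrow> 'y::finite \<Rightarrow> real"
  assumes ch: "channel W" and sg: "singular_channel W" and pos: "W x y > 0"
  shows "idens W x y = - ln (alpha W y)"
proof -
  have a: "alpha W y > 0" using alpha_pos[of W x y, OF pos] .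
  have "W x y / qU W y = 1 / alpha W y" using qU_eq[OF ch sg pos] pos a by simp
  then show ?thesis unfolding idens_def using a by (simp add: ln_div)
qed

lemma sum_F:
  fixes W :: "'x::finite \<Rightarrow> 'y::finite \<Rightarrow> real"
  assumes ch: "channel W" and sg: "singular_channel W"
  shows "(\<Sum>y\<in>UNIV. W x y * F (idens W x y)) = (\<Sum>y\<in>UNIV. W x y * F (- ln (alpha W y)))"
proof (rule sum.cong)
  fix y
  show "W x y * F (idens W x y) = W x y * F (- ln (alpha W y))"
  proof (cases "W x y > 0")
    case True then show ?thesis using idens_eq[OF ch sg True] by simp
  next
    case False then have "W x y = 0" using ch unfolding channel_def by (metis less_eq_real_def)
    then show ?thesis by simp
  qed
qed simp

lemma alpha_block:
  fixes W :: "'x::finite \<Rightarrow> 'y::finite \<Rightarrow> real"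
  assumes "\<exists>\<pi>. bij \<pi> \<and> (\<forall>x. W x y' = W (\<pi> x) y)"
  shows "alpha W y' = alpha W y"
proof -
  obtain \<pi> where b: "bij \<pi>" and e: "\<forall>x. W x y' = W (\<pi> x) y" using assms by blast
  have "{x. W x y' > 0} = \<pi> -` {x. W x y > 0}" using e by auto
  then have "card {x. W x y' > 0} = card {x. W x y > 0}"
    using card_vimage_inj[of \<pi> "{x. W x y > 0}"] b by (simp add: bij_def)
  then show ?thesis by (simp add: alpha_card)
qed

lemma key:
  fixes W :: "'x::finite \<Rightarrow> 'y::finite \<Rightarrow> real"
  assumes gs: "gallager_symmetric W"
  shows "(\<Sum>y\<in>UNIV. W x y * h (alpha W y)) = (\<Sum>y\<in>UNIV. W x' y * h (alpha W y))"
proof -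
  obtain Part where P: "partition_on (UNIV :: 'y set) Part" and
    H: "\<forall>B\<in>Part.
        (\<forall>x x'. \<exists>\<sigma>. bij_betw \<sigma> B B \<and> (\<forall>y\<in>B. W x' y = W x (\<sigma> y))) \<and>
        (\<forall>y\<in>B. \<forall>y'\<in>B. \<exists>\<pi>. bij \<pi> \<and> (\<forall>x. W x y' = W (\<pi> x) y))"
    using gs unfolding gallager_symmetric_def by blast
  have U: "\<Union>Part = UNIV" and D: "disjoint Part" using P by (auto simp: partition_on_def)
  have gen: "(\<Sum>y\<in>UNIV. g y) = (\<Sum>B\<in>Part. \<Sum>y\<in>B. g y)" for g :: "'y \<Rightarrow> real"
  proof -
    have "(\<Sum>y\<in>UNIV. g y) = (\<Sum>y\<in>\<Union>Part. g y)" using U by simp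
    also have "\<dots> = (\<Sum>B\<in>Part. \<Sum>y\<in>B. g y)"
      using sum.Union_disjoint[of Part g] D by (auto simp: disjoint_def)
    finally show ?thesis .
  qed
  have blk: "(\<Sum>y\<in>B. W x y * h (alpha W y)) = (\<Sum>y\<in>B. W x' y * h (alpha W y))" if B: "B \<in> Part" for B
  proof -
    obtain \<sigma> where s: "bij_betw \<sigma> B B" and e: "\<forall>y\<in>B. W x' y = W x (\<sigma> y)"
      using H B by blast
    have ab: "alpha W (\<sigma> y) = alpha W y" if "y \<in> B" for y
    proof -
      have "\<sigma> y \<in> B" using s that by (auto simp: bij_betw_def)
      then show ?thesis using H B that alpha_block by metis
    qed
    have "(\<Sum>y\<in>B. W x' y * h (alpha W y)) = (\<Sum>y\<in>B. W x (\<sigma> y) * h (alpha W (\<sigma> y)))"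
      using e ab by (intro sum.cong) auto
    also have "\<dots> = (\<Sum>y\<in>B. W x y * h (alpha W y))"
      using sum.reindex_bij_betw[OF s, of "\<lambda>y. W x y * h (alpha W y)"] by simp
    finally show ?thesis by simp
  qed
  show ?thesis unfolding gen by (rule sum.cong[OF refl]) (rule blk)
qed

lemma indep:
  fixes W :: "'x::finite \<Rightarrow> 'y::finite \<Rightarrow> real"
  assumes ch: "channel W" and gs: "gallager_symmetric W" and sg: "singular_channel W"
  shows "(\<Sum>y\<in>UNIV. W x y * F (idens W x y)) = (\<Sum>y\<in>UNIV. W x' y * F (idens W x' y))"
  unfolding sum_F[OF ch sg] using key[OF gs, of x "\<lambda>a. F (- ln a)" x'] by simp

lemma qU_sum:
  fixes W :: "'x::finite \<Rightarrow> 'y::finite \<Rightarrow> real"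
  assumes gs: "gallager_symmetric W"
  shows "(\<Sum>y\<in>UNIV. qU W y * G (alpha W y)) = (\<Sum>y\<in>UNIV. W xo y * G (alpha W y))"
proof -
  have "(\<Sum>y\<in>UNIV. qU W y * G (alpha W y)) = (\<Sum>y\<in>UNIV. \<Sum>x\<in>UNIV. W x y * G (alpha W y) / real CARD('x))"
    unfolding qU_def sum_distrib_right by simp
  also have "\<dots> = (\<Sum>x\<in>UNIV. (\<Sum>y\<in>UNIV. W x y * G (alpha W y)) / real CARD('x))"
    by (subst sum.swap) (simp add: sum_divide_distrib)
  also have "\<dots> = (\<Sum>x\<in>(UNIV::'x set). (\<Sum>y\<in>UNIV. W xo y * G (alpha W y)) / real CARD('x))"
    using key[OF gs] by metis
  also have "\<dots> = (\<Sum>y\<in>UNIV. W xo y * G (alpha W y))" by simp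
  finally show ?thesis .
qed

lemma sum_qP: 
  fixes W :: "'x::finite \<Rightarrow> 'y::finite \<Rightarrow> real"
  assumes ch: "channel W" and d: "dist P"
  shows "(\<Sum>y\<in>UNIV. qP P W y) = 1"
proof -
  have "(\<Sum>y\<in>UNIV. qP P W y) = (\<Sum>x\<in>UNIV. P x * (\<Sum>y\<in>UNIV. W x y))"
    unfolding qP_def sum_distrib_left by (rule sum.swap)
  also have "\<dots> = 1" using ch d by (simp add: channel_def dist_def)
  finally show ?thesis .
qed

lemma qP_nonneg:
  fixes W :: "'x::finite \<Rightarrow> 'y::finite \<Rightarrow> real"
  assumes ch: "channel W" and d: "dist P"
  shows "qP P W y \<ge> 0"
  unfolding qP_def using ch d by (auto simp: channel_def dist_def intro!: sum_nonneg)

definition U :: "'x::finite \<Rightarrow> real" where "U x = 1 / real CARD('x)"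

lemma dist_U: "dist (U :: 'x::finite \<Rightarrow> real)"
  by (simp add: dist_def U_def)

lemma qP_U: "qP U W = qU W"
  by (auto simp: qP_def qU_def U_def)

lemma qU_pos:
  fixes W :: "'x::finite \<Rightarrow> 'y::finite \<Rightarrow> real"
  assumes ch: "channel W" and sg: "singular_channel W" and nz: "no_zero_column W"
  shows "qU W y > 0"
proof -
  obtain x where "W x y \<noteq> 0" using nz unfolding no_zero_column_def by blast
  then have p: "W x y > 0" using ch unfolding channel_def by (metis less_eq_real_def)
  show ?thesis using qU_eq[OF ch sg p] alpha_pos[of W x y, OF p] p by simp
qed

lemma mean_const:
  fixes W :: "'x::finite \<Rightarrow> 'y::finite \<Rightarrow> real"
  assumes ch: "channel W" and gs: "gallager_symmetric W" and sg: "singular_channel W"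
  shows "mean_id W x = mean_id W xo"
  unfolding mean_id_def using indep[OF ch gs sg, of x "\<lambda>t. t" xo] by simp

lemma mi_decomp:
  fixes W :: "'x::finite \<Rightarrow> 'y::finite \<Rightarrow> real"
  assumes ch: "channel W" and gs: "gallager_symmetric W" and sg: "singular_channel W"
    and nz: "no_zero_column W" and d: "dist P"
  shows "mutual_info P W = mean_id W xo + (\<Sum>y\<in>UNIV. qP P W y * ln (qU W y / qP P W y))"
proof -
  have tm: "P x * W x y * ln (W x y / qP P W y)
     = P x * (W x y * idens W x y) + P x * W x y * ln (qU W y / qP P W y)" for x y
  proof (cases "P x * W x y = 0")
    case True then show ?thesis by auto
  next
    case False
    then have px: "P x > 0" and wx: "W x y > 0" using ch d unfolding channel_def dist_def
      by (metis less_eq_real_def mult_zero_left, metis less_eq_real_def mult_zero_right)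
    have "P x * W x y \<le> qP P W y" unfolding qP_def
      by (rule member_le_sum[of x UNIV "\<lambda>x. P x * W x y"]) (use ch d in \<open>auto simp: channel_def dist_def\<close>)
    then have r: "qP P W y > 0" using px wx by (smt (verit) mult_pos_pos)
    have u: "qU W y > 0" by (rule qU_pos[OF ch sg nz])
    have "ln (W x y / qP P W y) = idens W x y + ln (qU W y / qP P W y)"
      unfolding idens_def using r u wx by (simp add: ln_div)
    then show ?thesis by (simp add: algebra_simps)
  qed
  have "mutual_info P W = (\<Sum>x\<in>UNIV. P x * mean_id W x)
        + (\<Sum>x\<in>UNIV. \<Sum>y\<in>UNIV. P x * W x y * ln (qU W y / qP P W y))"
    unfolding mutual_info_def tm mean_id_def by (simp add: sum.distrib sum_distrib_left)
  also have "(\<Sum>x\<in>UNIV. P x * mean_id W x) = (\<Sum>x\<in>UNIV. P x * mean_id W xo)"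
  proof (rule sum.cong[OF refl])
    fix x show "P x * mean_id W x = P x * mean_id W xo" using mean_const[OF ch gs sg, of x xo] by simp
  qed
  also have "\<dots> = mean_id W xo" using d by (simp add: dist_def flip: sum_distrib_right)
  also have "(\<Sum>x\<in>UNIV. \<Sum>y\<in>UNIV. P x * W x y * ln (qU W y / qP P W y))
        = (\<Sum>y\<in>UNIV. qP P W y * ln (qU W y / qP P W y))"
    by (subst sum.swap) (simp add: qP_def sum_distrib_right)
  finally show ?thesis .
qed

lemma gibbs:
  fixes W :: "'x::finite \<Rightarrow> 'y::finite \<Rightarrow> real"
  assumes ch: "channel W" and sg: "singular_channel W"
    and nz: "no_zero_column W" and d: "dist P"
  shows "(\<Sum>y\<in>UNIV. qP P W y * ln (qU W y / qP P W y)) \<le> 0"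
    and "(\<Sum>y\<in>UNIV. qP P W y * ln (qU W y / qP P W y)) = 0 \<Longrightarrow> qP P W = qU W"
proof -
  define r where "r = qP P W"
  define u where "u = qU W"
  have r0: "r y \<ge> 0" for y unfolding r_def by (rule qP_nonneg[OF ch d])
  have u0: "u y > 0" for y unfolding u_def by (rule qU_pos[OF ch sg nz])
  have sr: "(\<Sum>y\<in>UNIV. r y) = 1" unfolding r_def by (rule sum_qP[OF ch d])
  have su: "(\<Sum>y\<in>UNIV. u y) = 1"
    using sum_qP[OF ch dist_U] unfolding qP_U u_def .
  define dd where "dd y = u y - r y - r y * ln (u y / r y)" for y
  have dd0: "dd y \<ge> 0" for y
  proof (cases "r y = 0")
    case True then show ?thesis using u0[of y] by (simp add: dd_def)
  next
    case False
    then have rp: "r y > 0" using r0[of y] by simp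
    have "ln (u y / r y) \<le> u y / r y - 1" using ln_le_minus_one[of "u y / r y"] u0[of y] rp by simp
    then have "r y * ln (u y / r y) \<le> r y * (u y / r y - 1)" using rp by simp
    also have "\<dots> = u y - r y" using rp by (simp add: field_simps)
    finally show ?thesis by (simp add: dd_def)
  qed
  have sd: "(\<Sum>y\<in>UNIV. dd y) = - (\<Sum>y\<in>UNIV. r y * ln (u y / r y))"
    unfolding dd_def sum_subtractf using sr su by simp
  have "(\<Sum>y\<in>UNIV. dd y) \<ge> 0" by (rule sum_nonneg) (use dd0 in auto)
  then show "(\<Sum>y\<in>UNIV. qP P W y * ln (qU W y / qP P W y)) \<le> 0"
    using sd unfolding r_def u_def by simp
  assume "(\<Sum>y\<in>UNIV. qP P W y * ln (qU W y / qP P W y)) = 0"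
  then have "(\<Sum>y\<in>UNIV. dd y) = 0" using sd unfolding r_def u_def by simp
  then have z: "dd y = 0" for y using sum_nonneg_eq_0_iff[of UNIV dd] dd0 by simp
  have "r y = u y" for y
  proof (cases "r y = 0")
    case True then show ?thesis using z[of y] u0[of y] by (simp add: dd_def)
  next
    case False
    then have rp: "r y > 0" using r0[of y] by simp
    have e1: "r y * (u y / r y - 1) = u y - r y" using rp by (simp add: field_simps)
    have "r y * ln (u y / r y) = r y * (u y / r y - 1)" unfolding e1 using z[of y] by (simp add: dd_def)
    then have "ln (u y / r y) = u y / r y - 1" using rp by simp
    then have "u y / r y = 1" using ln_eq_minus_one[of "u y / r y"] u0[of y] rp by simp
    then show ?thesis using rp by (simp add: field_simps)
  qed
  then show "qP P W = qU W" unfolding r_def u_def by auto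
qed

lemma capacity_eq:
  fixes W :: "'x::finite \<Rightarrow> 'y::finite \<Rightarrow> real"
  assumes ch: "channel W" and gs: "gallager_symmetric W" and sg: "singular_channel W"
    and nz: "no_zero_column W"
  shows "capacity W = mean_id W xo"
proof -
  have "mutual_info U W = mean_id W xo"
    using mi_decomp[OF ch gs sg nz dist_U, of xo] unfolding qP_U
    using qU_pos[OF ch sg nz] by (simp add: less_imp_neq[THEN not_sym])
  moreover have "mutual_info P W \<le> mean_id W xo" if "dist P" for P
    using mi_decomp[OF ch gs sg nz that, of xo] gibbs(1)[OF ch sg nz that] by simp
  ultimately show ?thesis unfolding capacity_def
    by (intro cSup_eq_maximum) (auto, metis dist_U image_eqI mem_Collect_eq)
qed

lemma Veps_eq:
  fixes W :: "'x::finite \<Rightarrow> 'y::finite \<Rightarrow> real"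
  assumes ch: "channel W" and gs: "gallager_symmetric W" and sg: "singular_channel W"
    and nz: "no_zero_column W"
  shows "Veps W e = var_id W xo"
proof -
  have V: "Vcond Q W = var_id W xo" if d: "dist Q" and mi: "mutual_info Q W = capacity W" for Q
  proof -
    have "(\<Sum>y\<in>UNIV. qP Q W y * ln (qU W y / qP Q W y)) = 0"
      using mi mi_decomp[OF ch gs sg nz d, of xo] capacity_eq[OF ch gs sg nz, of xo] by simp
    then have q: "qP Q W = qU W" using gibbs(2)[OF ch sg nz d] by simp
    have "Vcond Q W = (\<Sum>x\<in>UNIV. Q x * var_id W x)"
      unfolding Vcond_def q var_id_def mean_id_def idens_def
      by (simp add: sum_distrib_left mult.assoc)
    also have "\<dots> = (\<Sum>x\<in>UNIV. Q x * var_id W xo)"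
    proof (rule sum.cong[OF refl])
      fix x
      have m: "mean_id W x = mean_id W xo"
        using indep[OF ch gs sg, of x "\<lambda>t. t" xo] unfolding mean_id_def by simp
      have "var_id W x = var_id W xo"
        unfolding var_id_def m using indep[OF ch gs sg, of x "\<lambda>t. (t - mean_id W xo)\<^sup>2" xo] by simp
      then show "Q x * var_id W x = Q x * var_id W xo" by simp
    qed
    also have "\<dots> = var_id W xo" using d by (simp add: dist_def flip: sum_distrib_right)
    finally show ?thesis .
  qed
  have "mutual_info U W = capacity W"
    using mi_decomp[OF ch gs sg nz dist_U, of xo] capacity_eq[OF ch gs sg nz, of xo] unfolding qP_U
    using qU_pos[OF ch sg nz] by (simp add: less_imp_neq[THEN not_sym])
  then have "{Vcond Q W | Q. dist Q \<and> mutual_info Q W = capacity W} = {var_id W xo}"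
    using V dist_U by (auto intro!: exI[of _ U])
  then show ?thesis unfolding Veps_def by simp
qed

lemma finite_len: "finite {ys :: 'y::finite list. length ys = N}"
  using finite_lists_length_eq[of "UNIV :: 'y set" N] by simp

lemma sum_len_Suc:
  fixes F :: "'y::finite list \<Rightarrow> real"
  shows "(\<Sum>zs\<in>{zs. length zs = Suc N}. F zs) = (\<Sum>ys\<in>{ys. length ys = N}. \<Sum>y\<in>UNIV. F (ys @ [y]))"
proof -
  have im: "{zs :: 'y list. length zs = Suc N} = (\<lambda>(ys, y). ys @ [y]) ` ({ys. length ys = N} \<times> UNIV)"
  proof (rule set_eqI, rule iffI)
    fix zs :: "'y list" assume "zs \<in> {zs. length zs = Suc N}"
    then have l: "length zs = Suc N" by simp
    then have "zs \<noteq> []" by auto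
    then have "zs = butlast zs @ [last zs]" by simp
    then show "zs \<in> (\<lambda>(ys, y). ys @ [y]) ` ({ys. length ys = N} \<times> UNIV)"
      using l by (intro image_eqI[of _ _ "(butlast zs, last zs)"]) auto
  qed auto
  have inj: "inj_on (\<lambda>(ys, y). ys @ [y]) ({ys :: 'y list. length ys = N} \<times> UNIV)"
    by (auto simp: inj_on_def)
  show ?thesis unfolding im sum.reindex[OF inj] sum.cartesian_product
    by (simp add: case_prod_beta)
qed

lemma fb_snoc:
  assumes "length ys = N"
  shows "fb_prob W (Suc N) f m (ys @ [y]) = fb_prob W N f m ys * W (f N m ys) y"
proof -
  have "(\<Prod>n<N. W (f n m (take n (ys @ [y]))) ((ys @ [y]) ! n)) = (\<Prod>n<N. W (f n m (take n ys)) (ys ! n))"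
    using assms by (intro prod.cong) (auto simp: nth_append)
  then show ?thesis unfolding fb_prob_def using assms by (simp add: nth_append)
qed

lemma fb_step:
  fixes W :: "'x::finite \<Rightarrow> 'y::finite \<Rightarrow> real"
  assumes gs: "gallager_symmetric W"
  shows "(\<Sum>zs\<in>{zs. length zs = Suc N}. fb_prob W (Suc N) f m zs * G (map (alpha W) zs))
    = (\<Sum>ys\<in>{ys. length ys = N}. fb_prob W N f m ys *
         (\<lambda>as. \<Sum>y\<in>UNIV. W xo y * G (as @ [alpha W y])) (map (alpha W) ys))"
  unfolding sum_len_Suc
proof (rule sum.cong[OF refl])
  fix ys :: "'y list" assume "ys \<in> {ys. length ys = N}"
  then have l: "length ys = N" by simp
  have "(\<Sum>y\<in>UNIV. fb_prob W (Suc N) f m (ys @ [y]) * G (map (alpha W) (ys @ [y])))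
     = fb_prob W N f m ys * (\<Sum>y\<in>UNIV. W (f N m ys) y * G (map (alpha W) ys @ [alpha W y]))"
    unfolding fb_snoc[OF l] by (simp add: sum_distrib_left mult.assoc)
  also have "(\<Sum>y\<in>UNIV. W (f N m ys) y * G (map (alpha W) ys @ [alpha W y]))
     = (\<Sum>y\<in>UNIV. W xo y * G (map (alpha W) ys @ [alpha W y]))"
    by (rule key[OF gs, of _ "\<lambda>a. G (map (alpha W) ys @ [a])"])
  finally show "(\<Sum>y\<in>UNIV. fb_prob W (Suc N) f m (ys @ [y]) * G (map (alpha W) (ys @ [y])))
     = fb_prob W N f m ys * (\<lambda>as. \<Sum>y\<in>UNIV. W xo y * G (as @ [alpha W y])) (map (alpha W) ys)"
    by simp
qed

lemma fb_indep:
  fixes W :: "'x::finite \<Rightarrow> 'y::finite \<Rightarrow> real"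
  assumes gs: "gallager_symmetric W"
  shows "(\<Sum>ys\<in>{ys. length ys = N}. fb_prob W N f m ys * G (map (alpha W) ys))
       = (\<Sum>ys\<in>{ys. length ys = N}. fb_prob W N g m' ys * G (map (alpha W) ys))"
proof (induction N arbitrary: G)
  case 0
  have "{ys :: 'y list. length ys = 0} = {[]}" by auto
  then show ?case by (simp add: fb_prob_def)
next
  case (Suc N)
  show ?case unfolding fb_step[OF gs, where xo=undefined] by (rule Suc.IH)
qed

definition Gs :: "nat \<Rightarrow> real \<Rightarrow> real list \<Rightarrow> real" where
  "Gs N R as = (if (1 / real N) * (\<Sum>n<N. ln (1 / as ! n)) \<le> R then 1 else 0)"

lemma S_sum:
  fixes W :: "'x::finite \<Rightarrow> 'y::finite \<Rightarrow> real"
  shows "(\<Sum>ys\<in>S_set W N R. F ys) = (\<Sum>ys\<in>{ys. length ys = N}. F ys * Gs N R (map (alpha W) ys))"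
proof -
  have e: "S_set W N R = {ys \<in> {ys. length ys = N}. Gs N R (map (alpha W) ys) = 1}"
    unfolding S_set_def Gs_def by auto
  show ?thesis unfolding e sum.inter_filter[OF finite_len]
    by (rule sum.cong[OF refl]) (simp add: Gs_def)
qed

theorem feedback:
  fixes W :: "'x::finite \<Rightarrow> 'y::finite \<Rightarrow> real"
  assumes gs: "gallager_symmetric W"
  shows "(\<Sum>ys\<in>S_set W N R. fb_prob W N f m ys) = (\<Sum>ys\<in>S_set W N R. prod_prob W N (\<lambda>_. xo) ys)"
proof -
  have "prod_prob W N (\<lambda>_. xo) = fb_prob W N (\<lambda>_ _ _. xo) m"
    by (auto simp: prod_prob_def fb_prob_def)
  then show ?thesis unfolding S_sum by (simp add: fb_indep[OF gs, of N f m _ "\<lambda>_ _ _. xo" m])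
qed

lemma var_const:
  fixes W :: "'x::finite \<Rightarrow> 'y::finite \<Rightarrow> real"
  assumes ch: "channel W" and gs: "gallager_symmetric W" and sg: "singular_channel W"
  shows "var_id W x = var_id W xo"
  unfolding var_id_def mean_const[OF ch gs sg, of x xo]
  using indep[OF ch gs sg, of x "\<lambda>t. (t - mean_id W xo)\<^sup>2" xo] by simp

lemma qU_F:
  fixes W :: "'x::finite \<Rightarrow> 'y::finite \<Rightarrow> real"
  assumes ch: "channel W" and gs: "gallager_symmetric W" and sg: "singular_channel W"
  shows "(\<Sum>y\<in>UNIV. qU W y * F (- ln (alpha W y))) = (\<Sum>y\<in>UNIV. W xo y * F (idens W xo y))"
  using qU_sum[OF gs, of "\<lambda>a. F (- ln a)" xo] sum_F[OF ch sg, of xo F] by simp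

theorem lemma10:
  fixes W :: "'x::finite \<Rightarrow> 'y::finite \<Rightarrow> real" and xo :: 'x and \<epsilon> :: real
  assumes "channel W" and "gallager_symmetric W" and "singular_channel W"
    and "no_zero_column W" and "0 < \<epsilon>" and "\<epsilon> < 1"
  shows
    "(\<forall>x (lam::real). mgf W x lam = mgf W xo lam)
     \<and> (\<forall>x. mean_id W x = mean_id W xo \<and> mean_id W xo = capacity W
            \<and> var_id W x = var_id W xo \<and> m3 W x = m3 W xo)
     \<and> var_id W xo = Veps W \<epsilon>
     \<and> (\<forall>(R::real) (N::nat) (f :: nat \<Rightarrow> nat \<Rightarrow> 'y list \<Rightarrow> 'x) (m::nat).
          0 \<le> R \<longrightarrow> 0 < N \<longrightarrow> m \<in> {1..nat \<lceil>exp (real N * R)\<rceil>} \<longrightarrow>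
          (\<Sum>ys\<in>S_set W N R. fb_prob W N f m ys)
            = (\<Sum>ys\<in>S_set W N R. prod_prob W N (\<lambda>_. xo) ys))
     \<and> (\<Sum>y\<in>UNIV. qU W y * (- ln (alpha W y))) = capacity W
     \<and> (\<Sum>y\<in>UNIV. qU W y * (- ln (alpha W y) - capacity W)\<^sup>2) = var_id W xo
     \<and> (\<Sum>y\<in>UNIV. qU W y * \<bar>- ln (alpha W y) - capacity W\<bar> ^ 3) = m3 W xo"
proof -
  note ch = assms(1) and gs = assms(2) and sg = assms(3) and nz = assms(4)
  have C: "capacity W = mean_id W xo" by (rule capacity_eq[OF ch gs sg nz])
  have p1: "\<forall>x (lam::real). mgf W x lam = mgf W xo lam"
  proof (intro allI)
    fix x and lam :: real
    show "mgf W x lam = mgf W xo lam"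
      unfolding mgf_def by (rule indep[OF ch gs sg, of x "\<lambda>t. exp (lam * t)" xo])
  qed
  have p2: "\<forall>x. mean_id W x = mean_id W xo \<and> mean_id W xo = capacity W
            \<and> var_id W x = var_id W xo \<and> m3 W x = m3 W xo"
  proof
    fix x
    show "mean_id W x = mean_id W xo \<and> mean_id W xo = capacity W
            \<and> var_id W x = var_id W xo \<and> m3 W x = m3 W xo"
      using mean_const[OF ch gs sg, of x xo] C var_const[OF ch gs sg, of x xo]
        indep[OF ch gs sg, of x "\<lambda>t. \<bar>t - capacity W\<bar> ^ 3" xo]
      unfolding m3_def by simp
  qed
  have p3: "var_id W xo = Veps W \<epsilon>" using Veps_eq[OF ch gs sg nz, of \<epsilon> xo] by simp
  have p4: "\<forall>(R::real) (N::nat) (f :: nat \<Rightarrow> nat \<Rightarrow> 'y list \<Rightarrow> 'x) (m::nat).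
          0 \<le> R \<longrightarrow> 0 < N \<longrightarrow> m \<in> {1..nat \<lceil>exp (real N * R)\<rceil>} \<longrightarrow>
          (\<Sum>ys\<in>S_set W N R. fb_prob W N f m ys)
            = (\<Sum>ys\<in>S_set W N R. prod_prob W N (\<lambda>_. xo) ys)"
    using feedback[OF gs] by blast
  have p5: "(\<Sum>y\<in>UNIV. qU W y * (- ln (alpha W y))) = capacity W"
    using qU_F[OF ch gs sg, of "\<lambda>t. t" xo] C unfolding mean_id_def by simp
  have p6: "(\<Sum>y\<in>UNIV. qU W y * (- ln (alpha W y) - capacity W)\<^sup>2) = var_id W xo"
    using qU_F[OF ch gs sg, of "\<lambda>t. (t - capacity W)\<^sup>2" xo] C unfolding var_id_def by simp
  have p7: "(\<Sum>y\<in>UNIV. qU W y * \<bar>- ln (alpha W y) - capacity W\<bar> ^ 3) = m3 W xo"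
    using qU_F[OF ch gs sg, of "\<lambda>t. \<bar>t - capacity W\<bar> ^ 3" xo] unfolding m3_def by simp
  show ?thesis using p1 p2 p3 p4 p5 p6 p7 by blast
qed

end
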